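(* Let $k$ be a field, $V$ a finite-dimensional $k$-vector space and $A$ a finite arrangement of linear hyperplanes in $V$ with intersection lattice $L$ and natural sheaf $F$. Then $$\chi_q\,\mathrm{HS}_*(L\setminus\mathbf{0};\Lambda^\bullet F)=-\chi_L(1+q)+(1+q)^{\dim V}.$$
   Context: $L$ consists of all intersections of subsets of $A$ (empty intersection $=V$), ordered by reverse inclusion, minimum $\mathbf{0}=V$. Möbius function: $\mu_L(x,x)=1$, $\mu_L(x,y)=-\sum_{x\le z<y}\mu_L(x,z)$; $\chi_L(t)=\sum_{x\in L}\mu_L(\mathbf{0},x)t^{\dim x}$. A sheaf assigns a vector space $G(x)$ to each element and a linear map $G^y_x:G(y)\to G(x)$ for $x\le y$, functorially. Natural sheaf: $F(x)=x$, $F^y_x$ the inclusion $y\subseteq x$; $(\Lambda^jF)(x)=\Lambda^j(F(x))$, maps $\Lambda^j(F^y_x)$; $\Lambda^\bullet F=\bigoplus_{j\ge0}\Lambda^jF$. Sheaf homology $\mathrm{HS}_*(P;G)$ of a finite poset: homology of $S_n(P;G)=\bigoplus_\sigma G(x_0)$ over chains $\sigma=(x_n\le\cdots\le x_0)$ with $d(s_\sigma)=G^{x_0}_{x_1}(s)_{d_0\sigma}+\sum_{i=1}^n(-1)^is_{d_i\sigma}$; $L\setminus\mathbf{0}$ is $L$ with $V$ removed. Graded Euler characteristic: $\chi_q\,\mathrm{HS}_*(L\setminus\mathbf{0};\Lambda^\bullet F)=\sum_{k\ge0}q^k\sum_n(-1)^n\dim\mathrm{HS}_n(L\setminus\mathbf{0};\Lambda^kF)$.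 *)

theory Defs
  imports Complex_Main "HOL-Library.Function_Algebras" "HOL-Combinatorics.Permutations"
    "HOL-Computational_Algebra.Polynomial"
begin

definition fscale :: "'k::field \<Rightarrow> ('a \<Rightarrow> 'k) \<Rightarrow> ('a \<Rightarrow> 'k)" where
  "fscale c f = (\<lambda>p. c * f p)"

definition fdim :: "('a \<Rightarrow> 'k::field) set \<Rightarrow> nat" where
  "fdim S = vector_space.dim fscale S"

definition fspan :: "('a \<Rightarrow> 'k::field) set \<Rightarrow> ('a \<Rightarrow> 'k) set" where
  "fspan S = module.span fscale S"

text \<open>The n-dimensional coordinate space V = k^n, vectors indexed by 0..n-1.\<close>
definition Vn :: "nat \<Rightarrow> (nat \<Rightarrow> 'k::field) set" where
  "Vn n = {v. \<forall>i\<ge>n. v i = 0}"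

definition is_lin_hyperplane :: "nat \<Rightarrow> (nat \<Rightarrow> 'k::field) set \<Rightarrow> bool" where
  "is_lin_hyperplane n H \<longleftrightarrow>
     (\<exists>a::nat \<Rightarrow> 'k. (\<exists>i<n. a i \<noteq> 0) \<and> H = {v \<in> Vn n. (\<Sum>i<n. a i * v i) = 0})"

definition int_lattice :: "nat \<Rightarrow> (nat \<Rightarrow> 'k::field) set set \<Rightarrow> (nat \<Rightarrow> 'k) set set" where
  "int_lattice n A = {Vn n \<inter> \<Inter>B | B. B \<subseteq> A}"

definition lat_le :: "'a set \<Rightarrow> 'a set \<Rightarrow> bool" where
  "lat_le x y \<longleftrightarrow> y \<subseteq> x"

definition mobius :: "'a set \<Rightarrow> ('a \<Rightarrow> 'a \<Rightarrow> bool) \<Rightarrow> 'a \<Rightarrow> 'a \<Rightarrow> int" where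
  "mobius P le x = (THE f. \<forall>y. f y =
     (if y \<in> P \<and> le x y then
        (if y = x then 1 else - (\<Sum>z\<in>{z\<in>P. le x z \<and> le z y \<and> z \<noteq> y}. f z))
      else 0))"

definition char_poly :: "nat \<Rightarrow> (nat \<Rightarrow> 'k::field) set set \<Rightarrow> int poly" where
  "char_poly n A = (\<Sum>x\<in>int_lattice n A.
      smult (mobius (int_lattice n A) lat_le (Vn n) x) (monom 1 (fdim x)))"

definition det_leibniz :: "nat \<Rightarrow> (nat \<Rightarrow> nat \<Rightarrow> 'k::field) \<Rightarrow> 'k" where
  "det_leibniz j M = (\<Sum>p | p permutes {..<j}. of_int (sign p) * (\<Prod>a<j. M a (p a)))"

text \<open>Wedge v_1 ^ ... ^ v_j in Lambda^j(k^n), coordinates indexed by j-subsets of {0..n-1}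
  (basis e_S = e_{s_1} ^ ... ^ e_{s_j}, s_1 < ... < s_j).\<close>
definition wedge :: "nat \<Rightarrow> (nat \<Rightarrow> 'k::field) list \<Rightarrow> nat set \<Rightarrow> 'k" where
  "wedge n vs = (\<lambda>S. if S \<subseteq> {..<n} \<and> card S = length vs
      then det_leibniz (length vs) (\<lambda>a b. (vs ! a) (sorted_list_of_set S ! b)) else 0)"

text \<open>Lambda^j(W) for a subspace W of k^n, as the subspace of Lambda^j(k^n) spanned by
  wedges of vectors of W; Lambda^j of an inclusion of subspaces is then the inclusion.\<close>
definition ext_pow :: "nat \<Rightarrow> nat \<Rightarrow> (nat \<Rightarrow> 'k::field) set \<Rightarrow> (nat set \<Rightarrow> 'k) set" where
  "ext_pow n j W = fspan {wedge n vs | vs. length vs = j \<and> set vs \<subseteq> W}"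

text \<open>Chains sigma = (x_m < ... < x_0) in P, stored as the list [x_0, x_1, ..., x_m];
  in reverse inclusion order this means x_0 \<subset> x_1 \<subset> ... \<subset> x_m.\<close>
definition chains :: "'a set set \<Rightarrow> nat \<Rightarrow> 'a set list set" where
  "chains P m = {\<sigma>. length \<sigma> = Suc m \<and> set \<sigma> \<subseteq> P \<and> sorted_wrt (\<lambda>a b. a \<subset> b) \<sigma>}"

definition del_nth :: "nat \<Rightarrow> 'a list \<Rightarrow> 'a list" where
  "del_nth i xs = take i xs @ drop (Suc i) xs"

text \<open>S_m(P; Lambda^j F) = direct sum over m-chains sigma of Lambda^j(x_0).\<close>
definition chain_sp :: "nat \<Rightarrow> nat \<Rightarrow> (nat \<Rightarrow> 'k::field) set set \<Rightarrow> nat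
    \<Rightarrow> (((nat \<Rightarrow> 'k) set list \<times> nat set) \<Rightarrow> 'k) set" where
  "chain_sp n j P m = {f. \<forall>\<sigma>. (\<sigma> \<notin> chains P m \<longrightarrow> (\<forall>S. f (\<sigma>, S) = 0)) \<and>
        (\<sigma> \<in> chains P m \<longrightarrow> (\<lambda>S. f (\<sigma>, S)) \<in> ext_pow n j (hd \<sigma>))}"

text \<open>Boundary d: S_m \<rightarrow> S_(m-1), d(s_sigma) = (restriction of s)_(d_0 sigma)
  + sum_{i=1}^m (-1)^i s_(d_i sigma); restriction maps are inclusions here.\<close>
definition bdry :: "(nat \<Rightarrow> 'k::field) set set \<Rightarrow> nat
    \<Rightarrow> (((nat \<Rightarrow> 'k) set list \<times> nat set) \<Rightarrow> 'k)
    \<Rightarrow> (((nat \<Rightarrow> 'k) set list \<times> nat set) \<Rightarrow> 'k)" where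
  "bdry P m f = (\<lambda>(\<tau>, S). \<Sum>\<sigma>\<in>chains P m. \<Sum>i\<le>m.
       if del_nth i \<sigma> = \<tau> then (-1) ^ i * f (\<sigma>, S) else 0)"

definition cycles where
  "cycles n j P m = {f \<in> chain_sp n j P m. m = 0 \<or> bdry P m f = 0}"

definition boundaries where
  "boundaries n j P m = bdry P (Suc m) ` chain_sp n j P (Suc m)"

definition hs_dim :: "nat \<Rightarrow> nat \<Rightarrow> (nat \<Rightarrow> 'k::field) set set \<Rightarrow> nat \<Rightarrow> int" where
  "hs_dim n j P m = int (fdim (cycles n j P m)) - int (fdim (boundaries n j P m))"

text \<open>Euler characteristic sum_m (-1)^m dim HS_m; S_m = 0 for m \<ge> card P.\<close>
definition hs_euler :: "nat \<Rightarrow> nat \<Rightarrow> (nat \<Rightarrow> 'k::field) set set \<Rightarrow> int" where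
  "hs_euler n j P = (\<Sum>m\<le>card P. (-1) ^ m * hs_dim n j P m)"

end

theory Submission
  imports Defs "Jordan_Normal_Form.Determinant" "HOL-Combinatorics.Permutations"
begin


lemma fscale_vs: "vector_space (fscale :: 'k::field \<Rightarrow> ('a \<Rightarrow> 'k) \<Rightarrow> ('a \<Rightarrow> 'k))"
  by unfold_locales (auto simp: fscale_def fun_eq_iff algebra_simps)

interpretation fs: vector_space "fscale :: 'k::field \<Rightarrow> ('a \<Rightarrow> 'k) \<Rightarrow> ('a \<Rightarrow> 'k)"
  by (rule fscale_vs)

lemma fdim_eq: "fdim = fs.dim" by (simp add: fdim_def fun_eq_iff)
lemma fspan_eq: "fspan = fs.span" by (simp add: fspan_def fun_eq_iff)

lemma fscale_apply[simp]: "fscale c f x = c * f x" by (simp add: fscale_def)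
lemma sum_fun_apply: "(sum g A) x = (\<Sum>a\<in>A. g a x)"
  by (induction A rule: infinite_finite_induct) auto



lemma rank_nullity:
  fixes f :: "('a \<Rightarrow> 'k::field) \<Rightarrow> ('b \<Rightarrow> 'k)"
  assumes lin: "Vector_Spaces.linear fscale fscale f" and S: "fs.subspace S"
    and fin: "finite F" "S \<subseteq> fs.span F"
  shows "fs.dim S = fs.dim {x\<in>S. f x = 0} + fs.dim (f ` S)"
proof -
  let ?K = "{x\<in>S. f x = 0}"
  interpret L: Vector_Spaces.linear fscale fscale f by (rule lin)
  have Ksub: "fs.subspace ?K"
  proof -
    have "?K = S \<inter> {x. f x = 0}" by auto
    then show ?thesis using fs.subspace_inter[OF S L.subspace_kernel] by simp
  qed
  obtain BK where BK: "BK \<subseteq> ?K" "fs.independent BK" "?K \<subseteq> fs.span BK"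
    by (rule fs.maximal_independent_subset)
  obtain B where B: "BK \<subseteq> B" "B \<subseteq> S" "fs.independent B" "S \<subseteq> fs.span B"
    using fs.maximal_independent_subset_extend[of BK S] BK by auto
  have BF: "B \<subseteq> fs.span F" using B(2) fin(2) by blast
  have finB: "finite B" using fs.independent_span_bound[OF fin(1) B(3) BF] by simp
  define C where "C = B - BK"
  have finBK: "finite BK" "finite C" using finB B(1) C_def finite_subset by auto
  have dimS: "fs.dim S = card B" using fs.basis_card_eq_dim[OF B(2) B(4) B(3)] by simp
  have dimK: "fs.dim ?K = card BK" by (rule fs.basis_card_eq_dim[symmetric]) (use BK in auto)
  have cC: "card C = card B - card BK" unfolding C_def by (rule card_Diff_subset[OF finBK(1) B(1)])
  have cBK: "card BK \<le> card B" by (rule card_mono[OF finB B(1)])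
  have cardB: "card B = card BK + card C" using cC cBK by simp
  have spanBK_K: "fs.span BK \<subseteq> ?K" by (rule fs.span_minimal[OF BK(1) Ksub])
  have CS: "fs.span C \<subseteq> S" using fs.span_minimal[of C S] S B(2) C_def by auto
  have zero_int: "z = 0" if z1: "z \<in> fs.span BK" and z2: "z \<in> fs.span C" for z
  proof -
    obtain u where u: "z = (\<Sum>v\<in>BK. fscale (u v) v)" using z1 fs.span_finite[OF finBK(1)] by auto
    obtain w where w: "z = (\<Sum>v\<in>C. fscale (w v) v)" using z2 fs.span_finite[OF finBK(2)] by auto
    define g where "g v = (if v \<in> BK then u v else - w v)" for v
    have BU: "B = BK \<union> C" "BK \<inter> C = {}" using B(1) C_def by auto
    have "(\<Sum>v\<in>B. fscale (g v) v) = (\<Sum>v\<in>BK. fscale (g v) v) + (\<Sum>v\<in>C. fscale (g v) v)"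
      unfolding BU(1) by (rule sum.union_disjoint) (use finBK BU in auto)
    also have "(\<Sum>v\<in>BK. fscale (g v) v) = z" unfolding u by (rule sum.cong) (auto simp: g_def)
    also have "(\<Sum>v\<in>C. fscale (g v) v) = (\<Sum>v\<in>C. - fscale (w v) v)"
      by (rule sum.cong) (auto simp: g_def C_def fscale_def fun_eq_iff)
    also have "\<dots> = - z" unfolding w by (simp add: sum_negf)
    finally have "(\<Sum>v\<in>B. fscale (g v) v) = 0" by (metis add.right_inverse)
    note sum0 = this
    have g0: "g v = 0" if "v \<in> B" for v by (rule fs.independentD[OF B(3) finB order_refl sum0 that])
    show "z = 0" unfolding u proof (rule sum.neutral, rule ballI) fix v assume v: "v \<in> BK" then have "u v = 0" using g0[of v] B(1) by (auto simp: g_def) then show "fscale (u v) v = 0" by (simp add: fscale_def fun_eq_iff) qed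
  qed
  have inj: "inj_on f (fs.span C)"
    unfolding L.inj_on_iff_eq_0[OF fs.subspace_span]
  proof (intro ballI impI)
    fix x assume x: "x \<in> fs.span C" "f x = 0"
    then have "x \<in> ?K" using CS by auto
    then have "x \<in> fs.span BK" using BK(3) by auto
    then show "x = 0" using zero_int x(1) by blast
  qed
  have indepC: "fs.independent C" using fs.independent_mono[OF B(3)] C_def by auto
  have indep: "fs.independent (f ` C)" by (rule L.independent_injective_image[OF indepC inj])
  have cardfC: "card (f ` C) = card C"
    by (rule card_image, rule inj_on_subset[OF inj fs.span_superset])
  have fS_span: "f ` S \<subseteq> fs.span (f ` C)"
  proof
    fix y assume "y \<in> f ` S"
    then obtain x where x: "x \<in> S" "y = f x" by auto
    have "B = BK \<union> C" using B(1) C_def by auto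
    then have "x \<in> fs.span (BK \<union> C)" using B(4) x by auto
    then obtain a c where ac: "x = a + c" "a \<in> fs.span BK" "c \<in> fs.span C"
      unfolding fs.span_Un by auto
    have "f a = 0" using spanBK_K ac(2) by auto
    then have "y = f c" using x ac by (simp add: L.add)
    then show "y \<in> fs.span (f ` C)" using ac(3) L.span_image by auto
  qed
  have fCS: "f ` C \<subseteq> f ` S" using B(2) C_def by auto
  have "fs.dim (f ` S) = card (f ` C)" by (rule fs.dim_unique[OF fCS fS_span indep refl])
  then show ?thesis using dimS dimK cardB cardfC by simp
qed


declare fscale_apply[simp del]

definition Sp :: "'i set \<Rightarrow> ('i \<Rightarrow> ('b \<Rightarrow> 'k::field) set) \<Rightarrow> ('i \<times> 'b \<Rightarrow> 'k) set" where
  "Sp I U = {f. \<forall>\<sigma>. (\<sigma> \<notin> I \<longrightarrow> (\<forall>S. f (\<sigma>, S) = 0)) \<and> (\<sigma> \<in> I \<longrightarrow> (\<lambda>S. f (\<sigma>, S)) \<in> U \<sigma>)}"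

definition findim :: "('a \<Rightarrow> 'k::field) set \<Rightarrow> bool" where
  "findim X \<longleftrightarrow> (\<exists>F. finite F \<and> X \<subseteq> fs.span F)"

lemma lin_fI:
  assumes "\<And>x y. f (x + y) = f x + f y" "\<And>c x. f (fscale c x) = fscale c (f x)"
  shows "Vector_Spaces.linear fscale fscale f"
  unfolding Vector_Spaces.linear_iff by (intro conjI fscale_vs allI assms)

lemma Sp_subspace:
  fixes U :: "'i \<Rightarrow> ('b \<Rightarrow> 'k::field) set"
  assumes "\<And>i. i \<in> I \<Longrightarrow> fs.subspace (U i)"
  shows "fs.subspace (Sp I U)"
  unfolding fs.subspace_def
proof (intro conjI ballI allI)
  show "0 \<in> Sp I U" unfolding Sp_def
  proof (intro CollectI allI conjI impI)
    fix \<sigma> assume "\<sigma> \<in> I"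
    then have "0 \<in> U \<sigma>" using assms fs.subspace_0 by blast
    moreover have "(\<lambda>S. (0::'i \<times> 'b \<Rightarrow> 'k) (\<sigma>, S)) = 0" by (simp add: fun_eq_iff)
    ultimately show "(\<lambda>S. (0::'i \<times> 'b \<Rightarrow> 'k) (\<sigma>, S)) \<in> U \<sigma>" by simp
  qed simp
next
  fix x y assume x: "x \<in> Sp I U" and y: "y \<in> Sp I U"
  show "x + y \<in> Sp I U" unfolding Sp_def
  proof (intro CollectI allI conjI impI)
    fix \<sigma> assume s: "\<sigma> \<in> I"
    have "(\<lambda>S. (x + y) (\<sigma>, S)) = (\<lambda>S. x (\<sigma>, S)) + (\<lambda>S. y (\<sigma>, S))" by (simp add: fun_eq_iff)
    then show "(\<lambda>S. (x + y) (\<sigma>, S)) \<in> U \<sigma>"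
      using x y s assms[OF s] fs.subspace_add unfolding Sp_def by fastforce
  next
    fix \<sigma> S assume "\<sigma> \<notin> I" then show "(x + y) (\<sigma>, S) = 0" using x y unfolding Sp_def by simp
  qed
next
  fix c x assume x: "x \<in> Sp I U"
  show "fscale c x \<in> Sp I U" unfolding Sp_def
  proof (intro CollectI allI conjI impI)
    fix \<sigma> assume s: "\<sigma> \<in> I"
    have "(\<lambda>S. (fscale c x) (\<sigma>, S)) = fscale c (\<lambda>S. x (\<sigma>, S))" by (simp add: fun_eq_iff fscale_def)
    then show "(\<lambda>S. (fscale c x) (\<sigma>, S)) \<in> U \<sigma>"
      using x s assms[OF s] fs.subspace_scale unfolding Sp_def by fastforce
  next
    fix \<sigma> S assume "\<sigma> \<notin> I" then show "(fscale c x) (\<sigma>, S) = 0" using x unfolding Sp_def by (simp add: fscale_def)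
  qed
qed

lemma dim_zero_space: "fs.dim {0} = 0"
  by (rule fs.dim_unique[of "{}"]) (use fs.independent_empty in auto)

lemma Sp_dim:
  fixes U :: "'i \<Rightarrow> ('b \<Rightarrow> 'k::field) set"
  assumes "finite I" "\<And>i. i \<in> I \<Longrightarrow> fs.subspace (U i)" "\<And>i. i \<in> I \<Longrightarrow> findim (U i)"
  shows "findim (Sp I U) \<and> fs.dim (Sp I U) = (\<Sum>i\<in>I. fs.dim (U i))"
  using assms
proof (induction I rule: finite_induct)
  case empty
  have e: "Sp {} U = {0}" by (auto simp: Sp_def fun_eq_iff)
  show ?case unfolding e findim_def using dim_zero_space by (auto intro!: exI[of _ "{}"])
next
  case (insert i I)
  let ?S = "Sp (insert i I) U"
  define g where "g x = (\<lambda>(\<tau>,s). if \<tau> = i then 0 else x (\<tau>,s))" for x :: "'i \<times> 'b \<Rightarrow> 'k"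
  define e where "e u = (\<lambda>(\<tau>,s). if \<tau> = i then u s else 0)" for u :: "'b \<Rightarrow> 'k"
  have lin_g: "Vector_Spaces.linear fscale fscale g" by (rule lin_fI) (auto simp: g_def fun_eq_iff fscale_def)
  have lin_e: "Vector_Spaces.linear fscale fscale e" by (rule lin_fI) (auto simp: e_def fun_eq_iff fscale_def)
  have IH: "findim (Sp I U)" "fs.dim (Sp I U) = (\<Sum>i\<in>I. fs.dim (U i))" using insert by auto
  have Ui: "fs.subspace (U i)" "findim (U i)" using insert by auto
  have Ssub: "fs.subspace ?S" by (rule Sp_subspace) (use insert in auto)
  have gS: "g ` ?S = Sp I U"
  proof
    show "g ` ?S \<subseteq> Sp I U"
    proof
      fix y assume "y \<in> g ` ?S"
      then obtain x where x: "x \<in> ?S" "y = g x" by auto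
      have "(\<lambda>S. y (\<sigma>, S)) \<in> U \<sigma>" if s: "\<sigma> \<in> I" for \<sigma>
      proof -
        have "\<sigma> \<noteq> i" using s insert(2) by auto
        then have "(\<lambda>S. y (\<sigma>, S)) = (\<lambda>S. x (\<sigma>, S))" using x by (auto simp: g_def)
        then show ?thesis using x s unfolding Sp_def by auto
      qed
      moreover have "y (\<sigma>, S) = 0" if "\<sigma> \<notin> I" for \<sigma> S
        using x that unfolding Sp_def g_def by auto
      ultimately show "y \<in> Sp I U" unfolding Sp_def by blast
    qed
  next
    show "Sp I U \<subseteq> g ` ?S"
    proof
      fix y assume y: "y \<in> Sp I U"
      have "y (i, s) = 0" for s using y insert(2) by (auto simp: Sp_def)
      then have "g y = y" by (auto simp: g_def fun_eq_iff)
      moreover have "y \<in> ?S"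
      proof -
        have "0 \<in> U i" using Ui fs.subspace_0 by blast
        moreover have "(\<lambda>S. y (i, S)) = 0" using \<open>\<And>s. y (i, s) = 0\<close> by (simp add: fun_eq_iff)
        ultimately show ?thesis using y by (auto simp: Sp_def)
      qed
      ultimately show "y \<in> g ` ?S" by force
    qed
  qed
  have kerS: "{x\<in>?S. g x = 0} = e ` (U i)"
  proof
    show "{x\<in>?S. g x = 0} \<subseteq> e ` (U i)"
    proof
      fix x assume x: "x \<in> {x\<in>?S. g x = 0}"
      have "x = e (\<lambda>s. x (i, s))"
      proof
        fix p show "x p = e (\<lambda>s. x (i, s)) p"
          using fun_cong[OF conjunct2[OF x[simplified]], of p] by (cases p) (auto simp: g_def e_def)
      qed
      moreover have "(\<lambda>s. x (i, s)) \<in> U i" using x by (auto simp: Sp_def)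
      ultimately show "x \<in> e ` U i" by blast
    qed
  next
    show "e ` (U i) \<subseteq> {x\<in>?S. g x = 0}"
    proof
      fix x assume "x \<in> e ` U i"
      then obtain u where u: "u \<in> U i" "x = e u" by auto
      have "(\<lambda>s. x (\<sigma>, s)) \<in> U \<sigma>" if "\<sigma> \<in> I" for \<sigma>
      proof -
        have "\<sigma> \<noteq> i" using that insert(2) by auto
        then have "(\<lambda>s. x (\<sigma>, s)) = 0" using u by (auto simp: e_def fun_eq_iff)
        then show ?thesis using insert(4)[of \<sigma>] that fs.subspace_0 by auto
      qed
      then have "x \<in> ?S" using u by (auto simp: Sp_def e_def)
      moreover have "g x = 0" using u by (auto simp: g_def e_def fun_eq_iff)
      ultimately show "x \<in> {x\<in>?S. g x = 0}" by blast
    qed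
  qed
  obtain F2 where F2: "finite F2" "U i \<subseteq> fs.span F2" using Ui(2) unfolding findim_def by auto
  obtain F1 where F1: "finite F1" "Sp I U \<subseteq> fs.span F1" using IH(1) unfolding findim_def by auto
  have ker_e: "{u \<in> U i. e u = 0} = {0}"
  proof -
    have "u = 0" if eu: "e u = 0" for u
    proof (rule ext)
      fix s
      have "e u (i, s) = 0" using eu by simp
      then show "u s = 0 s" by (simp add: e_def)
    qed
    moreover have "e 0 = 0" by (simp add: e_def fun_eq_iff)
    ultimately show ?thesis using Ui(1) fs.subspace_0 by blast
  qed
  have dim_e: "fs.dim (e ` U i) = fs.dim (U i)"
    using rank_nullity[OF lin_e Ui(1) F2] unfolding ker_e dim_zero_space by simp
  have finS: "?S \<subseteq> fs.span (e ` F2 \<union> F1)"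
  proof
    fix x assume x: "x \<in> ?S"
    have dec: "x = e (\<lambda>s. x (i, s)) + g x" by (auto simp: e_def g_def fun_eq_iff)
    have "(\<lambda>s. x (i, s)) \<in> U i" using x by (auto simp: Sp_def)
    then have "e (\<lambda>s. x (i, s)) \<in> e ` fs.span F2" using F2 by auto
    also have "e ` fs.span F2 = fs.span (e ` F2)"
    proof -
      interpret Le: Vector_Spaces.linear fscale fscale e by (rule lin_e)
      show ?thesis using Le.span_image by simp
    qed
    also have "\<dots> \<subseteq> fs.span (e ` F2 \<union> F1)" by (rule fs.span_mono) auto
    finally have 1: "e (\<lambda>s. x (i, s)) \<in> fs.span (e ` F2 \<union> F1)" .
    have "g x \<in> Sp I U" using gS x by auto
    then have "g x \<in> fs.span F1" using F1 by auto
    also have "\<dots> \<subseteq> fs.span (e ` F2 \<union> F1)" by (rule fs.span_mono) auto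
    finally have 2: "g x \<in> fs.span (e ` F2 \<union> F1)" .
    show "x \<in> fs.span (e ` F2 \<union> F1)" using fs.span_add[OF 1 2] dec by simp
  qed
  have "fs.dim ?S = fs.dim {x\<in>?S. g x = 0} + fs.dim (g ` ?S)"
    by (rule rank_nullity[OF lin_g Ssub _ finS]) (use F1 F2 in auto)
  also have "\<dots> = fs.dim (U i) + (\<Sum>i\<in>I. fs.dim (U i))" unfolding kerS gS dim_e IH(2) ..
  finally have "fs.dim ?S = fs.dim (U i) + (\<Sum>i\<in>I. fs.dim (U i))" .
  moreover have "findim ?S" unfolding findim_def
    by (rule exI[of _ "e ` F2 \<union> F1"]) (use finS F1 F2 in auto)
  ultimately show ?case using insert(1,2) by simp
qed


lemma perm_lt: "p permutes {..<j} \<Longrightarrow> a < j \<Longrightarrow> p a < j"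
  using permutes_in_image[of p "{..<j}" a] by simp

lemma det_leibniz_cong:
  assumes "\<And>a b. a < j \<Longrightarrow> b < j \<Longrightarrow> M a b = N a b"
  shows "det_leibniz j M = det_leibniz j N"
  unfolding det_leibniz_def
  by (rule sum.cong[OF refl], rule arg_cong[where f="\<lambda>x. _ * x"], rule prod.cong[OF refl])
     (auto simp: assms permutes_in_image perm_lt)

lemma det_leibniz_jnf: "det_leibniz j M = Determinant.det (mat j j (\<lambda>(a,b). M a b))"
proof -
  have "Determinant.det (mat j j (\<lambda>(a,b). M a b)) =
     (\<Sum>p \<in> {p. p permutes {0..<j}}. signof p * (\<Prod>i = 0..<j. mat j j (\<lambda>(a,b). M a b) $$ (i, p i)))"
    unfolding Determinant.det_def by simp
  also have "\<dots> = (\<Sum>p | p permutes {..<j}. of_int (sign p) * (\<Prod>a<j. M a (p a)))"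
    unfolding atLeast0LessThan
    by (rule sum.cong[OF refl], rule arg_cong[where f="\<lambda>x. _ * x"], rule prod.cong[OF refl])
       (auto simp: permutes_in_image perm_lt)
  finally show ?thesis by (simp add: det_leibniz_def)
qed

lemma det_leibniz_perm_rows:
  assumes "\<pi> permutes {..<j}"
  shows "det_leibniz j (\<lambda>a b. M (\<pi> a) b) = of_int (sign \<pi>) * det_leibniz j M"
proof -
  let ?A = "mat j j (\<lambda>(a,b). M a b)"
  have "mat j j (\<lambda>(a,b). M (\<pi> a) b) = mat j j (\<lambda>(i,k). ?A $$ (\<pi> i, k))"
    by (rule eq_matI) (auto simp: permutes_in_image[OF assms] perm_lt[OF assms])
  moreover have "\<pi> permutes {0..<j}" using assms by (simp add: atLeast0LessThan)
  ultimately show ?thesis unfolding det_leibniz_jnf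
    using det_permute_rows[OF mat_carrier, of \<pi> j "\<lambda>(a,b). M a b"] by simp
qed

lemma det_leibniz_identical_rows:
  assumes "a < j" "a' < j" "a \<noteq> a'" "\<And>b. b < j \<Longrightarrow> M a b = M a' b"
  shows "det_leibniz j M = 0"
  unfolding det_leibniz_jnf
  by (rule det_identical_rows[OF mat_carrier assms(3,1,2)]) (auto simp: assms intro!: eq_vecI)

lemma det_leibniz_zero_row:
  assumes "a < j" "\<And>b. b < j \<Longrightarrow> M a b = 0"
  shows "det_leibniz j M = 0"
  unfolding det_leibniz_def
proof (rule sum.neutral, rule ballI)
  fix p assume "p \<in> {p. p permutes {..<j}}"
  then have "p a < j" using assms(1) by (simp add: permutes_in_image perm_lt)
  then have "(\<Prod>a<j. M a (p a)) = 0" using assms by (intro prod_zero) auto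
  then show "of_int (sign p) * (\<Prod>a<j. M a (p a)) = 0" by simp
qed

lemma det_leibniz_id: "det_leibniz j (\<lambda>a b. if a = b then 1 else 0) = (1::'k::field)"
proof -
  have "mat j j (\<lambda>(a,b). if a = b then 1 else 0) = (1\<^sub>m j :: 'k mat)" by (rule eq_matI) auto
  then show ?thesis unfolding det_leibniz_jnf by simp
qed

lemma prod_if_split:
  fixes j a0 :: nat
  assumes "a0 < j"
  shows "(\<Prod>a<j. (if a = a0 then Y a else Z a)) = Y a0 * (\<Prod>a\<in>{..<j}-{a0}. Z a)"
proof -
  have "(\<Prod>a<j. (if a = a0 then Y a else Z a)) =
      (if a0 = a0 then Y a0 else Z a0) * (\<Prod>a\<in>{..<j}-{a0}. (if a = a0 then Y a else Z a))"
    using assms by (subst prod.remove[of _ a0]) auto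
  also have "(\<Prod>a\<in>{..<j}-{a0}. (if a = a0 then Y a else Z a)) = (\<Prod>a\<in>{..<j}-{a0}. Z a)"
    by (rule prod.cong) auto
  finally show ?thesis by simp
qed

lemma det_leibniz_row_sum:
  assumes "a0 < j" "finite F"
  shows "det_leibniz j (\<lambda>a b. if a = a0 then (\<Sum>x\<in>F. u x * R x b) else M a b) =
     (\<Sum>x\<in>F. u x * det_leibniz j (\<lambda>a b. if a = a0 then R x b else M a b))"
proof -
  have "det_leibniz j (\<lambda>a b. if a = a0 then (\<Sum>x\<in>F. u x * R x b) else M a b) =
     (\<Sum>p | p permutes {..<j}. of_int (sign p) * ((\<Sum>x\<in>F. u x * R x (p a0)) * (\<Prod>a\<in>{..<j}-{a0}. M a (p a))))"
    unfolding det_leibniz_def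
    by (rule sum.cong[OF refl]) (subst prod_if_split[OF assms(1)], rule refl)
  also have "\<dots> = (\<Sum>p | p permutes {..<j}. \<Sum>x\<in>F. u x * (of_int (sign p) * (R x (p a0) * (\<Prod>a\<in>{..<j}-{a0}. M a (p a)))))"
    by (rule sum.cong[OF refl]) (simp add: sum_distrib_left sum_distrib_right mult_ac)
  also have "\<dots> = (\<Sum>x\<in>F. \<Sum>p | p permutes {..<j}. u x * (of_int (sign p) * (R x (p a0) * (\<Prod>a\<in>{..<j}-{a0}. M a (p a)))))"
    by (rule sum.swap)
  also have "\<dots> = (\<Sum>x\<in>F. u x * det_leibniz j (\<lambda>a b. if a = a0 then R x b else M a b))"
    unfolding det_leibniz_def
    by (rule sum.cong[OF refl]) (subst prod_if_split[OF assms(1)], simp add: sum_distrib_left)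
  finally show ?thesis .
qed


lemma wedge_out: "\<not> (S \<subseteq> {..<n} \<and> card S = length ws) \<Longrightarrow> wedge n ws S = 0"
  unfolding wedge_def by (simp only: if_False)

lemma wedge_slot_sum:
  assumes k: "k < length vs" and F: "finite F" and vk: "vs ! k = (\<Sum>x\<in>F. fscale (u x) x)"
  shows "wedge n vs = (\<Sum>x\<in>F. fscale (u x) (wedge n (vs[k := x])))"
proof (rule ext)
  fix S
  show "wedge n vs S = (\<Sum>x\<in>F. fscale (u x) (wedge n (vs[k := x]))) S"
  proof (cases "S \<subseteq> {..<n} \<and> card S = length vs")
    case True
    let ?s = "sorted_list_of_set S"
    have "wedge n vs S = det_leibniz (length vs) (\<lambda>a b. (vs!a) (?s!b))" using True by (simp add: wedge_def)
    also have "(\<lambda>a b. (vs!a) (?s!b)) = (\<lambda>a b. if a = k then (\<Sum>x\<in>F. u x * x (?s!b)) else (vs!a)(?s!b))"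
      using vk by (auto simp: fun_eq_iff sum_fun_apply fscale_def)
    also have "det_leibniz (length vs) \<dots> =
        (\<Sum>x\<in>F. u x * det_leibniz (length vs) (\<lambda>a b. if a = k then x (?s!b) else (vs!a) (?s!b)))"
      by (rule det_leibniz_row_sum[OF k F])
    also have "\<dots> = (\<Sum>x\<in>F. fscale (u x) (wedge n (vs[k:=x])) S)"
    proof (rule sum.cong[OF refl])
      fix x
      have e: "(\<lambda>a b. (vs[k:=x] ! a) (?s!b)) = (\<lambda>a b. if a = k then x (?s!b) else (vs!a)(?s!b))"
        using k by (auto simp: fun_eq_iff nth_list_update)
      have "wedge n (vs[k:=x]) S = det_leibniz (length vs) (\<lambda>a b. (vs[k:=x] ! a) (?s!b))"
        using True by (simp add: wedge_def)
      then show "u x * det_leibniz (length vs) (\<lambda>a b. if a = k then x (?s!b) else (vs!a) (?s!b)) =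
          fscale (u x) (wedge n (vs[k:=x])) S" unfolding e by (simp add: fscale_def)
    qed
    also have "\<dots> = (\<Sum>x\<in>F. fscale (u x) (wedge n (vs[k := x]))) S" by (simp add: sum_fun_apply)
    finally show ?thesis .
  next
    case False
    then have "wedge n vs S = 0" "\<And>x. wedge n (vs[k:=x]) S = 0" by (auto intro!: wedge_out)
    then show ?thesis by (simp add: sum_fun_apply fscale_def)
  qed
qed

lemma wedge_permute:
  assumes "\<pi> permutes {..<length ts}"
  shows "wedge n (permute_list \<pi> ts) = fscale (of_int (sign \<pi>)) (wedge n ts)"
proof (rule ext)
  fix S
  show "wedge n (permute_list \<pi> ts) S = fscale (of_int (sign \<pi>)) (wedge n ts) S"
  proof (cases "S \<subseteq> {..<n} \<and> card S = length ts")
    case True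
    let ?s = "sorted_list_of_set S"
    have "wedge n (permute_list \<pi> ts) S = det_leibniz (length ts) (\<lambda>a b. (permute_list \<pi> ts ! a) (?s!b))"
      using True by (simp add: wedge_def)
    also have "\<dots> = det_leibniz (length ts) (\<lambda>a b. (ts ! \<pi> a) (?s!b))"
      by (rule det_leibniz_cong) (simp add: permute_list_nth[OF assms])
    also have "\<dots> = of_int (sign \<pi>) * det_leibniz (length ts) (\<lambda>a b. (ts ! a) (?s!b))"
      by (rule det_leibniz_perm_rows[OF assms])
    moreover have "wedge n ts S = det_leibniz (length ts) (\<lambda>a b. (ts ! a) (?s!b))"
      using True by (simp add: wedge_def)
    ultimately show ?thesis by (simp add: fscale_def)
  next
    case False
    then have "wedge n ts S = 0" "wedge n (permute_list \<pi> ts) S = 0" by (auto intro!: wedge_out)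
    then show ?thesis by (simp add: fscale_def)
  qed
qed

lemma wedge_not_distinct:
  assumes "\<not> distinct vs"
  shows "wedge n vs = 0"
proof (rule ext)
  fix S
  obtain a a' where aa: "a < length vs" "a' < length vs" "a \<noteq> a'" "vs ! a = vs ! a'"
    using assms by (auto simp: distinct_conv_nth)
  show "wedge n vs S = 0 S"
    unfolding wedge_def
    using det_leibniz_identical_rows[OF aa(1,2,3), of "\<lambda>a b. (vs!a) (sorted_list_of_set S ! b)"] aa(4)
    by simp
qed

lemma wedge_expand:
  assumes "\<And>a. a < length vs \<Longrightarrow> vs ! a \<in> fs.span X"
  shows "wedge n vs \<in> fs.span {wedge n ws | ws. length ws = length vs \<and> set ws \<subseteq> X}"
proof -
  let ?G = "{wedge n ws | ws. length ws = length vs \<and> set ws \<subseteq> X}"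
  let ?j = "length vs"
  have main: "\<forall>vs. length vs = ?j \<longrightarrow> (\<forall>a<?j. vs!a \<in> fs.span X) \<longrightarrow> (\<forall>a. m \<le> a \<and> a < ?j \<longrightarrow> vs!a \<in> X)
     \<longrightarrow> wedge n vs \<in> fs.span ?G" for m
  proof (induction m)
    case 0
    show ?case
    proof (intro allI impI)
      fix ws assume "length ws = ?j" "\<forall>a. 0 \<le> a \<and> a < ?j \<longrightarrow> ws ! a \<in> X"
      then have "set ws \<subseteq> X" by (auto simp: in_set_conv_nth)
      then show "wedge n ws \<in> fs.span ?G" using \<open>length ws = ?j\<close> by (intro fs.span_base) auto
    qed
  next
    case (Suc m)
    show ?case
    proof (intro allI impI)
      fix ws assume l: "length ws = ?j" and sp: "\<forall>a<?j. ws!a \<in> fs.span X"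
        and inX: "\<forall>a. Suc m \<le> a \<and> a < ?j \<longrightarrow> ws ! a \<in> X"
      show "wedge n ws \<in> fs.span ?G"
      proof (cases "m < ?j")
        case False
        then show ?thesis using Suc.IH l sp inX by auto
      next
        case True
        have "ws ! m \<in> fs.span X" using sp True by auto
        then obtain F u where F: "finite F" "F \<subseteq> X" "ws ! m = (\<Sum>x\<in>F. fscale (u x) x)"
          unfolding fs.span_explicit by auto
        have eq: "wedge n ws = (\<Sum>x\<in>F. fscale (u x) (wedge n (ws[m := x])))"
          by (rule wedge_slot_sum[OF _ F(1) F(3)]) (use True l in simp)
        have "wedge n (ws[m := x]) \<in> fs.span ?G" if x: "x \<in> F" for x
        proof -
          have "length (ws[m := x]) = ?j" using l by simp
          moreover have "x \<in> fs.span X" using x F(2) fs.span_base by blast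
          then have "\<forall>a<?j. ws[m:=x]!a \<in> fs.span X"
            using sp l True by (auto simp: nth_list_update)
          moreover have "\<forall>a. m \<le> a \<and> a < ?j \<longrightarrow> ws[m:=x] ! a \<in> X"
            using inX x F(2) l by (auto simp: nth_list_update)
          ultimately show ?thesis using Suc.IH by blast
        qed
        then show ?thesis unfolding eq by (intro fs.span_sum fs.span_scale)
      qed
    qed
  qed
  show ?thesis using main[of ?j] assms by auto
qed


declare fscale_apply[simp del]

lemma Vn_subspace: "fs.subspace (Vn n :: (nat \<Rightarrow> 'k::field) set)"
  unfolding fs.subspace_def Vn_def by (auto simp: fscale_def)

definition unitv :: "nat \<Rightarrow> nat \<Rightarrow> 'k::field" where
  "unitv i = (\<lambda>k. if k = i then 1 else 0)"

lemma Vn_span: "Vn n \<subseteq> fs.span (unitv ` {..<n} :: (nat \<Rightarrow> 'k::field) set)"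
proof
  fix v :: "nat \<Rightarrow> 'k" assume v: "v \<in> Vn n"
  have "v = (\<Sum>i<n. fscale (v i) (unitv i))"
  proof (rule ext)
    fix k
    have "(\<Sum>i<n. fscale (v i) (unitv i)) k = (\<Sum>i<n. v i * (if k = i then 1 else 0))"
      by (simp add: sum_fun_apply fscale_def unitv_def)
    also have "\<dots> = (\<Sum>i<n. if i = k then v k else 0)" by (rule sum.cong) auto
    also have "\<dots> = v k" using v by (cases "k < n") (auto simp: Vn_def)
    finally show "v k = (\<Sum>i<n. fscale (v i) (unitv i)) k" by simp
  qed
  also have "\<dots> \<in> fs.span (unitv ` {..<n})"
    by (intro fs.span_sum fs.span_scale fs.span_base) auto
  finally show "v \<in> fs.span (unitv ` {..<n})" .
qed

definition is_pivot :: "nat \<Rightarrow> (nat \<Rightarrow> nat \<Rightarrow> 'k::field) \<Rightarrow> (nat \<Rightarrow> nat) \<Rightarrow> bool" where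
  "is_pivot d b p \<longleftrightarrow> (\<forall>c<d. \<forall>c'<d. b c (p c') = (if c = c' then 1 else 0))"

lemma sum_delta_eval:
  assumes "is_pivot d b p" "c' < d"
  shows "(\<Sum>c<d. fscale (f c) (b c)) (p c') = f c'"
proof -
  have "(\<Sum>c<d. fscale (f c) (b c)) (p c') = (\<Sum>c<d. f c * (if c = c' then 1 else 0))"
    using assms unfolding is_pivot_def by (auto simp: sum_fun_apply fscale_def intro!: sum.cong)
  also have "\<dots> = f c'" using assms(2) by (simp add: if_distrib cong: if_cong)
  finally show ?thesis .
qed

lemma pivot_exists:
  fixes X :: "(nat \<Rightarrow> 'k::field) set"
  assumes "finite X" "X \<subseteq> Vn n"
  shows "\<exists>d b p. (\<forall>c<d. b c \<in> fs.span X \<and> p c < n) \<and> is_pivot d b p \<and> X \<subseteq> fs.span (b ` {..<d})"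
  using assms
proof (induction X rule: finite_induct)
  case empty
  show ?case by (rule exI[of _ 0]) (auto simp: is_pivot_def)
next
  case (insert v X)
  then obtain d b p where bp: "\<forall>c<d. b c \<in> fs.span X \<and> p c < n" "is_pivot d b p" "X \<subseteq> fs.span (b ` {..<d})"
    by auto
  have spX: "fs.span X \<subseteq> fs.span (insert v X)" by (rule fs.span_mono) auto
  define v' where "v' = v - (\<Sum>c<d. fscale (v (p c)) (b c))"
  have v'p: "v' (p c) = 0" if "c < d" for c
    unfolding v'_def using sum_delta_eval[OF bp(2) that, of "\<lambda>c. v (p c)"] by simp
  have v'span: "v' \<in> fs.span (insert v X)"
    unfolding v'_def using bp(1) spX
    by (intro fs.span_diff fs.span_sum fs.span_scale) (auto intro: fs.span_base)
  show ?case
  proof (cases "v' = 0")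
    case True
    then have "v = (\<Sum>c<d. fscale (v (p c)) (b c))" unfolding v'_def by simp
    also have "\<dots> \<in> fs.span (b ` {..<d})" by (intro fs.span_sum fs.span_scale fs.span_base) auto
    finally have "insert v X \<subseteq> fs.span (b ` {..<d})" using bp(3) by auto
    then show ?thesis using bp(1,2) spX by blast
  next
    case False
    have VnS: "fs.span X \<subseteq> Vn n" using insert(4) Vn_subspace by (intro fs.span_minimal) auto
    have "v' \<in> Vn n"
    proof -
      have "v' \<in> fs.span (insert v X)" by (rule v'span)
      also have "\<dots> \<subseteq> Vn n" using insert(4) Vn_subspace by (intro fs.span_minimal) auto
      finally show ?thesis .
    qed
    obtain q where q: "v' q \<noteq> 0" using False by (auto simp: fun_eq_iff)
    have qn: "q < n" using q \<open>v' \<in> Vn n\<close> by (auto simp: Vn_def) (meson not_le)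
    define u where "u = fscale (inverse (v' q)) v'"
    have uq: "u q = 1" using q by (simp add: u_def fscale_def)
    have up: "u (p c) = 0" if "c < d" for c using v'p[OF that] by (simp add: u_def fscale_def)
    have uspan: "u \<in> fs.span (insert v X)" unfolding u_def by (intro fs.span_scale v'span)
    define b' where "b' c = (if c = d then u else b c - fscale (b c q) u)" for c
    define p' where "p' = p(d := q)"
    have piv: "is_pivot (Suc d) b' p'"
      unfolding is_pivot_def
    proof (intro allI impI)
      fix c c' assume c: "c < Suc d" and c': "c' < Suc d"
      show "b' c (p' c') = (if c = c' then 1 else 0)"
      proof (cases "c = d")
        case True
        then show ?thesis using c' uq up by (cases "c' = d") (auto simp: b'_def p'_def)
      next
        case False
        then have cd: "c < d" using c by simp
        show ?thesis
        proof (cases "c' = d")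
          case True
          then show ?thesis using False uq by (simp add: b'_def p'_def fscale_def)
        next
          case False
          then have "c' < d" using c' by simp
          then show ?thesis using \<open>c \<noteq> d\<close> False up[of c'] bp(2) cd
            by (simp add: b'_def p'_def fscale_def is_pivot_def)
        qed
      qed
    qed
    have b'span: "\<forall>c<Suc d. b' c \<in> fs.span (insert v X) \<and> p' c < n"
    proof (intro allI impI conjI)
      fix c assume c: "c < Suc d"
      show "b' c \<in> fs.span (insert v X)"
      proof (cases "c = d")
        case True then show ?thesis using uspan by (simp add: b'_def)
      next
        case False
        then have "b c \<in> fs.span (insert v X)" using c bp(1) spX by auto
        then show ?thesis using False uspan by (simp add: b'_def fs.span_diff fs.span_scale)
      qed
      show "p' c < n" using c bp(1) qn by (auto simp: p'_def)
    qed
    have bin: "b c \<in> fs.span (b' ` {..<Suc d})" if "c < d" for c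
    proof -
      have "b c = b' c + fscale (b c q) (b' d)" using that by (simp add: b'_def)
      moreover have "b' c \<in> fs.span (b' ` {..<Suc d})" "b' d \<in> fs.span (b' ` {..<Suc d})"
        using that by (auto intro: fs.span_base)
      ultimately show ?thesis by (metis fs.span_add fs.span_scale)
    qed
    have "fs.span (b ` {..<d}) \<subseteq> fs.span (b' ` {..<Suc d})"
      using bin by (intro fs.span_minimal) auto
    then have Xin: "X \<subseteq> fs.span (b' ` {..<Suc d})" using bp(3) by auto
    have "fscale (v' q) u = v'" using q by (simp add: u_def fscale_def fun_eq_iff)
    then have "v = fscale (v' q) u + (\<Sum>c<d. fscale (v (p c)) (b c))"
      by (simp add: v'_def)
    also have "\<dots> \<in> fs.span (b' ` {..<Suc d})"
    proof (intro fs.span_add fs.span_scale fs.span_sum)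
      show "u \<in> fs.span (b' ` {..<Suc d})" by (rule fs.span_base) (auto simp: b'_def intro!: image_eqI[of _ _ d])
      fix c assume "c \<in> {..<d}" then show "b c \<in> fs.span (b' ` {..<Suc d})" using bin by auto
    qed
    finally have "insert v X \<subseteq> fs.span (b' ` {..<Suc d})" using Xin by auto
    then show ?thesis using piv b'span by blast
  qed
qed

lemma pivot_inj:
  assumes "is_pivot d b p"
  shows "inj_on p {..<d}" "inj_on b {..<d}"
proof -
  show "inj_on p {..<d}"
  proof (rule inj_onI)
    fix c c' assume "c \<in> {..<d}" "c' \<in> {..<d}" "p c = p c'"
    then have "b c (p c) = b c (p c')" by simp
    then show "c = c'" using assms \<open>c \<in> {..<d}\<close> \<open>c' \<in> {..<d}\<close> unfolding is_pivot_def
      by (auto split: if_splits)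
  qed
  show "inj_on b {..<d}"
  proof (rule inj_onI)
    fix c c' assume "c \<in> {..<d}" "c' \<in> {..<d}" "b c = b c'"
    then have "b c (p c) = b c' (p c)" by simp
    then show "c = c'" using assms \<open>c \<in> {..<d}\<close> \<open>c' \<in> {..<d}\<close> unfolding is_pivot_def
      by (auto split: if_splits)
  qed
qed

lemma pivot_indep:
  assumes "is_pivot d b p"
  shows "fs.independent (b ` {..<d})"
proof (rule fs.independent_if_scalars_zero)
  show "finite (b ` {..<d})" by simp
  fix f x assume s: "(\<Sum>x\<in>b ` {..<d}. fscale (f x) x) = 0" and x: "x \<in> b ` {..<d}"
  then obtain c where c: "c < d" "x = b c" by auto
  have "(\<Sum>x\<in>b ` {..<d}. fscale (f x) x) = (\<Sum>c<d. fscale (f (b c)) (b c))"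
    by (rule sum.reindex[OF pivot_inj(2)[OF assms], unfolded comp_def])
  then have "(\<Sum>c<d. fscale (f (b c)) (b c)) (p c) = 0" using s by simp
  then show "f x = 0" using sum_delta_eval[OF assms c(1), of "\<lambda>c. f (b c)"] c by simp
qed


lemma wedge_reduce:
  assumes inj: "inj_on b {..<d}" and ws: "set ws \<subseteq> b ` {..<d}"
  shows "wedge n ws \<in> fs.span ((\<lambda>T. wedge n (map b (sorted_list_of_set T))) ` {T. T \<subseteq> {..<d} \<and> card T = length ws})"
    (is "_ \<in> fs.span (?w ` ?TS)")
proof (cases "distinct ws")
  case False
  then show ?thesis using wedge_not_distinct fs.span_zero by metis
next
  case True
  define fs where "fs = map (the_inv_into {..<d} b) ws"
  have wsfs: "ws = map b fs" unfolding fs_def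
    by (rule nth_equalityI) (use ws f_the_inv_into_f[OF inj] in \<open>auto simp: subset_iff\<close>)
  have fsd: "set fs \<subseteq> {..<d}" unfolding fs_def using ws the_inv_into_into[OF inj] by auto
  have dfs: "distinct fs" using True wsfs by (simp add: distinct_map)
  define T where "T = set fs"
  define t where "t = sorted_list_of_set T"
  have cT: "card T = length ws" unfolding T_def using distinct_card[OF dfs] wsfs by simp
  have TS: "T \<in> ?TS" using fsd cT T_def by auto
  have "mset fs = mset t"
    using set_eq_iff_mset_eq_distinct[OF dfs, of t] by (simp add: t_def T_def)
  then obtain \<pi> where pi: "\<pi> permutes {..<length t}" "permute_list \<pi> t = fs"
    by (rule mset_eq_permutation)
  have "permute_list \<pi> (map b t) = map b (permute_list \<pi> t)" by (rule permute_list_map[OF pi(1)])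
  then have "ws = permute_list \<pi> (map b t)" using wsfs pi(2) by simp
  then have "wedge n ws = fscale (of_int (sign \<pi>)) (wedge n (map b t))"
    using wedge_permute[of \<pi> "map b t" n] pi(1) by simp
  also have "\<dots> \<in> fs.span (?w ` ?TS)"
    using TS by (intro fs.span_scale fs.span_base) (auto simp: t_def)
  finally show ?thesis .
qed

lemma sign_nz: "(of_int (sign \<pi>) :: 'k::field) \<noteq> 0"
  by (cases \<pi> rule: sign_cases) auto

lemma wedge_pivot_eval:
  fixes b :: "nat \<Rightarrow> nat \<Rightarrow> 'k::field"
  assumes piv: "is_pivot d b p" and pn: "\<forall>c<d. p c < n"
    and T: "T \<subseteq> {..<d}" and T': "T' \<subseteq> {..<d}" and cT: "card T = j" "card T' = j"
  shows "T \<noteq> T' \<Longrightarrow> wedge n (map b (sorted_list_of_set T)) (p ` T') = 0"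
    and "T = T' \<Longrightarrow> wedge n (map b (sorted_list_of_set T)) (p ` T') \<noteq> 0"
proof -
  define S where "S = p ` T'"
  define s where "s = sorted_list_of_set S"
  define t where "t = sorted_list_of_set T"
  have fT: "finite T" "finite T'" using T T' finite_subset by auto
  have injp: "inj_on p T'" using pivot_inj(1)[OF piv] T' inj_on_subset by blast
  have cS: "card S = j" unfolding S_def using card_image[OF injp] cT by simp
  have fS: "finite S" unfolding S_def using fT by simp
  have Sn: "S \<subseteq> {..<n}" unfolding S_def using T' pn by auto
  have ls: "length s = j" "distinct s" "set s = S" unfolding s_def using cS fS by auto
  have lt: "length t = j" "distinct t" "set t = T" unfolding t_def using cT fT by auto
  have wd: "wedge n (map b t) S = det_leibniz j (\<lambda>a \<beta>. b (t!a) (s!\<beta>))"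
    unfolding wedge_def s_def using Sn cS lt(1) by (auto intro!: det_leibniz_cong)
  have sb: "\<exists>c\<in>T'. s!\<beta> = p c" if "\<beta> < j" for \<beta>
  proof -
    have "s!\<beta> \<in> S" using ls that nth_mem by metis
    then show ?thesis unfolding S_def by auto
  qed
  have bpc: "b e (p c) = (if e = c then 1 else 0)" if "e < d" "c < d" for e c
    using piv that unfolding is_pivot_def by auto
  show "T \<noteq> T' \<Longrightarrow> wedge n (map b (sorted_list_of_set T)) (p ` T') = 0"
  proof -
    assume ne: "T \<noteq> T'"
    have "\<not> T \<subseteq> T'" using card_subset_eq[OF fT(2), of T] cT ne by auto
    then obtain e where e: "e \<in> T" "e \<notin> T'" by auto
    then obtain a where a: "a < j" "t!a = e" using lt by (metis in_set_conv_nth)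
    have "det_leibniz j (\<lambda>a \<beta>. b (t!a) (s!\<beta>)) = 0"
    proof (rule det_leibniz_zero_row[OF a(1)])
      fix \<beta> assume "\<beta> < j"
      then obtain c where c: "c \<in> T'" "s!\<beta> = p c" using sb by blast
      have "e \<noteq> c" using c e by auto
      moreover have "t!a < d" using a(2) e(1) T by auto
      moreover have "c < d" using c T' by auto
      ultimately show "b (t!a) (s!\<beta>) = 0" using bpc a(2) c(2) by simp
    qed
    then show ?thesis using wd by (simp add: S_def t_def)
  qed
  show "T = T' \<Longrightarrow> wedge n (map b (sorted_list_of_set T)) (p ` T') \<noteq> 0"
  proof -
    assume eq: "T = T'"
    define ps where "ps = map p t"
    have injT: "inj_on p T" using injp eq by simp
    have dps: "distinct ps" unfolding ps_def using lt injT by (simp add: distinct_map)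
    have "set ps = S" unfolding ps_def S_def using lt eq by simp
    then have "mset ps = mset s" using set_eq_iff_mset_eq_distinct[OF dps ls(2)] ls by simp
    then obtain \<pi> where pi: "\<pi> permutes {..<length s}" "permute_list \<pi> s = ps"
      by (rule mset_eq_permutation)
    have pi': "\<pi> permutes {..<j}" using pi ls by simp
    have pta: "p (t!a) = s!(\<pi> a)" if "a < j" for a
    proof -
      have "ps ! a = permute_list \<pi> s ! a" using pi by simp
      also have "\<dots> = s ! (\<pi> a)" using permute_list_nth[OF pi(1)] that ls by simp
      finally show ?thesis using that lt unfolding ps_def by simp
    qed
    have M: "b (t!a) (s!\<beta>) = (if \<pi> a = \<beta> then 1 else 0)" if a: "a < j" and be: "\<beta> < j" for a \<beta>
    proof -
      obtain c where c: "c \<in> T'" "s!\<beta> = p c" using sb be by blast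
      have ta: "t!a \<in> T" using lt a nth_mem by metis
      have "(t!a = c) \<longleftrightarrow> (p (t!a) = p c)" using injT ta c eq by (auto dest: inj_onD)
      also have "\<dots> \<longleftrightarrow> (s!(\<pi> a) = s!\<beta>)" using pta[OF a] c by simp
      also have "\<dots> \<longleftrightarrow> \<pi> a = \<beta>" using nth_eq_iff_index_eq[OF ls(2)] ls(1) be perm_lt[OF pi' a] by simp
      finally have "(t!a = c) \<longleftrightarrow> \<pi> a = \<beta>" .
      moreover have "t!a < d" "c < d" using ta c T T' by auto
      ultimately show ?thesis using bpc c by simp
    qed
    have "det_leibniz j (\<lambda>a \<beta>. b (t!a) (s!\<beta>)) = det_leibniz j (\<lambda>a \<beta>. (\<lambda>a' \<beta>. if a' = \<beta> then 1 else 0) (\<pi> a) \<beta>)"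
      by (rule det_leibniz_cong) (simp add: M)
    also have "\<dots> = of_int (sign \<pi>) * det_leibniz j (\<lambda>a' \<beta>. if a' = \<beta> then 1 else 0)"
      by (rule det_leibniz_perm_rows[OF pi'])
    also have "\<dots> = of_int (sign \<pi>)" by (simp add: det_leibniz_id)
    finally show ?thesis using wd sign_nz by (simp add: S_def t_def)
  qed
qed

lemma ext_pow_dim:
  fixes W :: "(nat \<Rightarrow> 'k::field) set"
  assumes WV: "W \<subseteq> Vn n"
  shows "findim (ext_pow n j W) \<and> fs.subspace (ext_pow n j W) \<and> fs.dim (ext_pow n j W) = fs.dim W choose j"
proof -
  obtain B0 where B0: "B0 \<subseteq> W" "fs.independent B0" "W \<subseteq> fs.span B0"
    by (rule fs.maximal_independent_subset)
  have "B0 \<subseteq> fs.span (unitv ` {..<n})" using B0(1) WV Vn_span by blast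
  then have finB0: "finite B0" using fs.independent_span_bound[OF _ B0(2)] by blast
  have dimW: "fs.dim W = card B0" using fs.basis_card_eq_dim[OF B0(1,3,2)] by simp
  obtain d b p where bp: "\<forall>c<d. b c \<in> fs.span B0 \<and> p c < n" "is_pivot d b p" "B0 \<subseteq> fs.span (b ` {..<d})"
    using pivot_exists[OF finB0] B0(1) WV by blast
  have injb: "inj_on b {..<d}" by (rule pivot_inj(2)[OF bp(2)])
  have spb: "fs.span (b ` {..<d}) = fs.span B0"
    using bp(1,3) fs.span_eq by blast
  have "card B0 = d"
  proof -
    have "card B0 = fs.dim (fs.span B0)" using fs.dim_span_eq_card_independent[OF B0(2)] by simp
    also have "\<dots> = fs.dim (fs.span (b ` {..<d}))" using spb by simp
    also have "\<dots> = card (b ` {..<d})" by (rule fs.dim_span_eq_card_independent[OF pivot_indep[OF bp(2)]])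
    also have "\<dots> = d" using card_image[OF injb] by simp
    finally show ?thesis .
  qed
  then have dimW': "fs.dim W = d" using dimW by simp
  define TS where "TS = {T. T \<subseteq> {..<d} \<and> card T = j}"
  define w where "w T = wedge n (map b (sorted_list_of_set T))" for T
  define G0 where "G0 = {wedge n vs | vs. length vs = j \<and> set vs \<subseteq> W}"
  have EP: "ext_pow n j W = fs.span G0" unfolding ext_pow_def G0_def fspan_eq ..
  have w_in: "w ` TS \<subseteq> ext_pow n j W"
  proof
    fix y assume "y \<in> w ` TS"
    then obtain T where T: "T \<in> TS" "y = w T" by auto
    have fT: "finite T" using T finite_subset unfolding TS_def by auto
    let ?t = "map b (sorted_list_of_set T)"
    have "length ?t = j" using T fT unfolding TS_def by simp
    have "?t ! a \<in> fs.span B0" if "a < length ?t" for a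
    proof -
      have "sorted_list_of_set T ! a \<in> T" using that fT nth_mem by (metis length_map set_sorted_list_of_set)
      then show ?thesis using that bp(1) T unfolding TS_def by auto
    qed
    then have "wedge n ?t \<in> fs.span {wedge n ws | ws. length ws = length ?t \<and> set ws \<subseteq> B0}"
      by (rule wedge_expand)
    also have "\<dots> \<subseteq> fs.span G0"
      using B0(1) \<open>length ?t = j\<close> unfolding G0_def by (intro fs.span_mono) auto
    finally show "y \<in> ext_pow n j W" using T EP unfolding w_def by simp
  qed
  have sp_w: "ext_pow n j W \<subseteq> fs.span (w ` TS)"
    unfolding EP
  proof (rule fs.span_minimal[OF _ fs.subspace_span], rule subsetI)
    fix y assume "y \<in> G0"
    then obtain vs where vs: "y = wedge n vs" "length vs = j" "set vs \<subseteq> W" unfolding G0_def by auto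
    have "vs ! a \<in> fs.span (b ` {..<d})" if "a < length vs" for a
      using vs(3) B0(3) spb that nth_mem by blast
    then have "wedge n vs \<in> fs.span {wedge n ws | ws. length ws = length vs \<and> set ws \<subseteq> b ` {..<d}}"
      by (rule wedge_expand)
    also have "\<dots> \<subseteq> fs.span (w ` TS)"
    proof (rule fs.span_minimal[OF _ fs.subspace_span], rule subsetI)
      fix z assume "z \<in> {wedge n ws | ws. length ws = length vs \<and> set ws \<subseteq> b ` {..<d}}"
      then obtain ws where ws: "z = wedge n ws" "length ws = j" "set ws \<subseteq> b ` {..<d}" using vs by auto
      show "z \<in> fs.span (w ` TS)" using wedge_reduce[OF injb ws(3), of n] ws unfolding w_def TS_def by simp
    qed
    finally show "y \<in> fs.span (w ` TS)" using vs by simp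
  qed
  have evz: "w T (p ` T') = 0" if "T \<in> TS" "T' \<in> TS" "T \<noteq> T'" for T T'
    using wedge_pivot_eval(1)[OF bp(2) _ _ _ _ _ that(3)] that bp(1) unfolding TS_def w_def by auto
  have evnz: "w T (p ` T) \<noteq> 0" if "T \<in> TS" for T
    using wedge_pivot_eval(2)[OF bp(2) _ _ _ _ _ refl] that bp(1) unfolding TS_def w_def by auto
  have injw: "inj_on w TS"
  proof (rule inj_onI)
    fix T T' assume T: "T \<in> TS" "T' \<in> TS" "w T = w T'"
    show "T = T'"
    proof (rule ccontr)
      assume "T \<noteq> T'"
      then have "w T' (p ` T) = 0" using evz T by auto
      then show False using evnz[OF T(1)] T(3) by simp
    qed
  qed
  have finTS: "finite TS" unfolding TS_def by simp
  have indep: "fs.independent (w ` TS)"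
  proof (rule fs.independent_if_scalars_zero)
    show "finite (w ` TS)" using finTS by simp
    fix f x assume s: "(\<Sum>x\<in>w ` TS. fscale (f x) x) = 0" and x: "x \<in> w ` TS"
    then obtain T where T: "T \<in> TS" "x = w T" by auto
    have "(\<Sum>x\<in>w ` TS. fscale (f x) x) = (\<Sum>T'\<in>TS. fscale (f (w T')) (w T'))"
      by (rule sum.reindex[OF injw, unfolded comp_def])
    then have "0 = (\<Sum>T'\<in>TS. fscale (f (w T')) (w T')) (p ` T)" using s by simp
    also have "\<dots> = (\<Sum>T'\<in>TS. f (w T') * w T' (p ` T))" by (simp add: sum_fun_apply fscale_def)
    also have "\<dots> = (\<Sum>T'\<in>TS. if T' = T then f (w T) * w T (p ` T) else 0)"
      by (rule sum.cong) (use evz T in auto)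
    also have "\<dots> = f (w T) * w T (p ` T)" using T finTS by simp
    finally show "f x = 0" using evnz[OF T(1)] T by simp
  qed
  have "card (w ` TS) = d choose j"
    using card_image[OF injw] n_subsets[of "{..<d}" j] unfolding TS_def by simp
  then have "fs.dim (ext_pow n j W) = d choose j"
    using fs.dim_unique[OF w_in sp_w indep] by simp
  moreover have "findim (ext_pow n j W)" unfolding findim_def using sp_w finTS by blast
  moreover have "fs.subspace (ext_pow n j W)" unfolding EP by simp
  ultimately show ?thesis using dimW' by simp
qed


lemma sorted_wrt_psubset_distinct: "sorted_wrt (\<lambda>a b. a \<subset> b) xs \<Longrightarrow> distinct xs"
  by (induction xs) auto

lemma finite_chains: "finite P \<Longrightarrow> finite (chains P m)"
proof -
  assume "finite P"
  have "chains P m \<subseteq> {xs. set xs \<subseteq> P \<and> length xs = Suc m}" unfolding chains_def by auto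
  then show ?thesis using finite_lists_length_eq[OF \<open>finite P\<close>] finite_subset by blast
qed

lemma chains_empty:
  assumes "finite P" "card P \<le> m"
  shows "chains P m = {}"
proof (rule ccontr)
  assume "chains P m \<noteq> {}"
  then obtain \<sigma> where s: "length \<sigma> = Suc m" "set \<sigma> \<subseteq> P" "sorted_wrt (\<lambda>a b. a \<subset> b) \<sigma>"
    unfolding chains_def by auto
  have "card (set \<sigma>) = Suc m" using distinct_card[OF sorted_wrt_psubset_distinct[OF s(3)]] s(1) by simp
  moreover have "card (set \<sigma>) \<le> card P" using card_mono[OF assms(1) s(2)] .
  ultimately show False using assms(2) by simp
qed

definition cnt :: "'a set set \<Rightarrow> nat \<Rightarrow> 'a set \<Rightarrow> nat" where
  "cnt P m y = card {\<sigma> \<in> chains P m. hd \<sigma> = y}"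

definition cc :: "'a set set \<Rightarrow> 'a set \<Rightarrow> int" where
  "cc P y = (\<Sum>m\<le>card P. (-1)^m * int (cnt P m y))"

lemma cnt0: "y \<in> P \<Longrightarrow> cnt P 0 y = 1"
proof -
  assume y: "y \<in> P"
  have "{\<sigma> \<in> chains P 0. hd \<sigma> = y} = {[y]}"
  proof
    show "{\<sigma> \<in> chains P 0. hd \<sigma> = y} \<subseteq> {[y]}"
    proof
      fix \<sigma> assume "\<sigma> \<in> {\<sigma> \<in> chains P 0. hd \<sigma> = y}"
      then have "length \<sigma> = 1" "hd \<sigma> = y" unfolding chains_def by auto
      then show "\<sigma> \<in> {[y]}" by (cases \<sigma>) auto
    qed
    show "{[y]} \<subseteq> {\<sigma> \<in> chains P 0. hd \<sigma> = y}" using y unfolding chains_def by auto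
  qed
  then show ?thesis unfolding cnt_def by simp
qed

lemma cnt_Suc:
  assumes fin: "finite P" and y: "y \<in> P"
  shows "cnt P (Suc m) y = (\<Sum>z\<in>{z\<in>P. y \<subset> z}. cnt P m z)"
proof -
  let ?C = "chains P m"
  have eq: "{\<sigma> \<in> chains P (Suc m). hd \<sigma> = y} = (\<lambda>\<tau>. y # \<tau>) ` {\<tau> \<in> ?C. y \<subset> hd \<tau>}"
  proof
    show "{\<sigma> \<in> chains P (Suc m). hd \<sigma> = y} \<subseteq> (\<lambda>\<tau>. y # \<tau>) ` {\<tau> \<in> ?C. y \<subset> hd \<tau>}"
    proof
      fix \<sigma> assume "\<sigma> \<in> {\<sigma> \<in> chains P (Suc m). hd \<sigma> = y}"
      then have s: "length \<sigma> = Suc (Suc m)" "set \<sigma> \<subseteq> P" "sorted_wrt (\<lambda>a b. a \<subset> b) \<sigma>" "hd \<sigma> = y"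
        unfolding chains_def by auto
      then obtain \<tau> where t: "\<sigma> = y # \<tau>" by (cases \<sigma>) auto
      have "\<tau> \<noteq> []" using s(1) t by auto
      then have "y \<subset> hd \<tau>" using s(3) t by (cases \<tau>) auto
      moreover have "\<tau> \<in> ?C" using s t unfolding chains_def by auto
      ultimately show "\<sigma> \<in> (\<lambda>\<tau>. y # \<tau>) ` {\<tau> \<in> ?C. y \<subset> hd \<tau>}" using t by auto
    qed
    show "(\<lambda>\<tau>. y # \<tau>) ` {\<tau> \<in> ?C. y \<subset> hd \<tau>} \<subseteq> {\<sigma> \<in> chains P (Suc m). hd \<sigma> = y}"
    proof
      fix \<sigma> assume "\<sigma> \<in> (\<lambda>\<tau>. y # \<tau>) ` {\<tau> \<in> ?C. y \<subset> hd \<tau>}"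
      then obtain \<tau> where t: "\<sigma> = y # \<tau>" "\<tau> \<in> ?C" "y \<subset> hd \<tau>" by auto
      then have tt: "length \<tau> = Suc m" "set \<tau> \<subseteq> P" "sorted_wrt (\<lambda>a b. a \<subset> b) \<tau>" unfolding chains_def by auto
      obtain x \<tau>' where x: "\<tau> = x # \<tau>'" using tt(1) by (cases \<tau>) auto
      have "\<forall>z\<in>set \<tau>. y \<subset> z" using t(3) tt(3) x by auto
      then show "\<sigma> \<in> {\<sigma> \<in> chains P (Suc m). hd \<sigma> = y}" using t(1) tt y unfolding chains_def by auto
    qed
  qed
  have "cnt P (Suc m) y = card {\<tau> \<in> ?C. y \<subset> hd \<tau>}"
    unfolding cnt_def eq by (rule card_image) (auto simp: inj_on_def)
  also have "{\<tau> \<in> ?C. y \<subset> hd \<tau>} = (\<Union>z\<in>{z\<in>P. y \<subset> z}. {\<tau> \<in> ?C. hd \<tau> = z})"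
  proof -
    have "hd \<tau> \<in> P" if "\<tau> \<in> ?C" for \<tau>
      using that unfolding chains_def by (cases \<tau>) auto
    then show ?thesis by auto
  qed
  also have "card \<dots> = (\<Sum>z\<in>{z\<in>P. y \<subset> z}. card {\<tau> \<in> ?C. hd \<tau> = z})"
    by (rule card_UN_disjoint) (use fin finite_chains[OF fin] in auto)
  finally show ?thesis unfolding cnt_def .
qed

lemma cc_rec:
  assumes fin: "finite P" and y: "y \<in> P"
  shows "cc P y = 1 - (\<Sum>z\<in>{z\<in>P. y \<subset> z}. cc P z)"
proof -
  obtain N where N: "card P = Suc N" using y fin by (cases "card P") auto
  have cz: "cnt P (Suc N) z = 0" for z using chains_empty[OF fin, of "Suc N"] N by (simp add: cnt_def)
  have ccz: "cc P z = (\<Sum>m\<le>N. (-1)^m * int (cnt P m z))" for z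
    unfolding cc_def N by (simp add: cz)
  have "cc P y = (\<Sum>m\<le>Suc N. (-1)^m * int (cnt P m y))" unfolding cc_def N ..
  also have "\<dots> = int (cnt P 0 y) + (\<Sum>m\<le>N. (-1)^(Suc m) * int (cnt P (Suc m) y))"
    by (subst sum.atMost_Suc_shift) simp
  also have "\<dots> = 1 - (\<Sum>m\<le>N. (-1)^m * (\<Sum>z\<in>{z\<in>P. y \<subset> z}. int (cnt P m z)))"
    by (simp add: cnt0[OF y] cnt_Suc[OF fin y] sum_negf)
  also have "\<dots> = 1 - (\<Sum>z\<in>{z\<in>P. y \<subset> z}. \<Sum>m\<le>N. (-1)^m * int (cnt P m z))"
    by (simp add: sum_distrib_left sum.swap[of _ "{..N}"])
  also have "\<dots> = 1 - (\<Sum>z\<in>{z\<in>P. y \<subset> z}. cc P z)" by (simp add: ccz)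
  finally show ?thesis .
qed

lemma mobius_unique:
  fixes f g :: "'a set \<Rightarrow> int"
  assumes fin: "finite L"
    and f: "\<forall>y. f y = (if y \<in> L \<and> lat_le V y then (if y = V then 1 else
          - (\<Sum>z\<in>{z\<in>L. lat_le V z \<and> lat_le z y \<and> z \<noteq> y}. f z)) else 0)"
    and g: "\<forall>y. g y = (if y \<in> L \<and> lat_le V y then (if y = V then 1 else
          - (\<Sum>z\<in>{z\<in>L. lat_le V z \<and> lat_le z y \<and> z \<noteq> y}. g z)) else 0)"
  shows "f y = g y"
proof (induction y rule: measure_induct_rule[of "\<lambda>y. card {z\<in>L. y \<subset> z}"])
  case (less y)
  have "f z = g z" if z: "z \<in> {z\<in>L. lat_le V z \<and> lat_le z y \<and> z \<noteq> y}" for z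
  proof (rule less)
    have yz: "y \<subset> z" using z by (auto simp: lat_le_def)
    have "{w\<in>L. z \<subset> w} \<subset> {w\<in>L. y \<subset> w}"
    proof
      show "{w\<in>L. z \<subset> w} \<subseteq> {w\<in>L. y \<subset> w}" using yz by auto
      show "{w\<in>L. z \<subset> w} \<noteq> {w\<in>L. y \<subset> w}" using yz z by auto
    qed
    then show "card {w\<in>L. z \<subset> w} < card {w\<in>L. y \<subset> w}" by (rule psubset_card_mono[rotated]) (use fin in auto)
  qed
  then have se: "(\<Sum>z\<in>{z\<in>L. lat_le V z \<and> lat_le z y \<and> z \<noteq> y}. f z) = (\<Sum>z\<in>{z\<in>L. lat_le V z \<and> lat_le z y \<and> z \<noteq> y}. g z)"
    by (rule sum.cong[OF refl])
  show ?case by (subst spec[OF f, of y], subst spec[OF g, of y], simp only: se)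
qed

lemma mobius_eq:
  assumes fin: "finite L" and VL: "V \<in> L" and sub: "\<forall>x\<in>L. x \<subseteq> V"
  shows "mobius L lat_le V y = (if y \<in> L then (if y = V then 1 else - cc (L - {V}) y) else 0)"
proof -
  define h where "h y = (if y \<in> L then (if y = V then 1 else - cc (L - {V}) y) else 0)" for y
  have finP: "finite (L - {V})" using fin by simp
  have hs: "\<forall>y. h y = (if y \<in> L \<and> lat_le V y then (if y = V then 1 else
          - (\<Sum>z\<in>{z\<in>L. lat_le V z \<and> lat_le z y \<and> z \<noteq> y}. h z)) else 0)"
  proof
    fix y
    show "h y = (if y \<in> L \<and> lat_le V y then (if y = V then 1 else
          - (\<Sum>z\<in>{z\<in>L. lat_le V z \<and> lat_le z y \<and> z \<noteq> y}. h z)) else 0)"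
    proof (cases "y \<in> L \<and> y \<noteq> V")
      case False
      then show ?thesis using sub by (auto simp: h_def lat_le_def)
    next
      case True
      then have yP: "y \<in> L - {V}" by simp
      have Z: "{z\<in>L. lat_le V z \<and> lat_le z y \<and> z \<noteq> y} = insert V {z\<in>L - {V}. y \<subset> z}"
        using sub True VL by (auto simp: lat_le_def)
      have "(\<Sum>z\<in>{z\<in>L. lat_le V z \<and> lat_le z y \<and> z \<noteq> y}. h z) = h V + (\<Sum>z\<in>{z\<in>L - {V}. y \<subset> z}. h z)"
        unfolding Z by (rule sum.insert) (use fin in auto)
      also have "\<dots> = 1 - (\<Sum>z\<in>{z\<in>L - {V}. y \<subset> z}. cc (L - {V}) z)"
        by (simp add: h_def VL sum_negf)
      also have "\<dots> = cc (L - {V}) y" using cc_rec[OF finP yP] by simp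
      finally show ?thesis using True sub by (simp add: h_def lat_le_def)
    qed
  qed
  have "mobius L lat_le V = h"
    unfolding mobius_def
  proof (rule the_equality)
    show "\<forall>y. h y = (if y \<in> L \<and> lat_le V y then (if y = V then 1 else
          - (\<Sum>z\<in>{z\<in>L. lat_le V z \<and> lat_le z y \<and> z \<noteq> y}. h z)) else 0)" by (rule hs)
    fix f :: "'a set \<Rightarrow> int" assume "\<forall>y. f y = (if y \<in> L \<and> lat_le V y then (if y = V then 1 else
          - (\<Sum>z\<in>{z\<in>L. lat_le V z \<and> lat_le z y \<and> z \<noteq> y}. f z)) else 0)"
    then show "f = h" using mobius_unique[OF fin _ hs] by blast
  qed
  then show ?thesis by (simp add: h_def)
qed


declare fscale_apply[simp del]

lemma int_lattice_finite: "finite A \<Longrightarrow> finite (int_lattice n A)"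
proof -
  assume "finite A"
  have "int_lattice n A = (\<lambda>B. Vn n \<inter> \<Inter>B) ` Pow A" unfolding int_lattice_def by auto
  then show ?thesis using \<open>finite A\<close> by simp
qed

lemma Vn_in_lattice: "Vn n \<in> int_lattice n A"
  unfolding int_lattice_def by auto

lemma lattice_sub: "x \<in> int_lattice n A \<Longrightarrow> x \<subseteq> Vn n"
  unfolding int_lattice_def by auto

lemma chain_sp_Sp: "chain_sp n j P m = Sp (chains P m) (\<lambda>\<sigma>. ext_pow n j (hd \<sigma>))"
  unfolding chain_sp_def Sp_def ..

lemma hd_chain: "\<sigma> \<in> chains P m \<Longrightarrow> hd \<sigma> \<in> P"
  unfolding chains_def by (cases \<sigma>) auto

lemma dim_chain:
  fixes P :: "(nat \<Rightarrow> 'k::field) set set"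
  assumes fin: "finite P" and sub: "\<forall>x\<in>P. x \<subseteq> Vn n"
  shows "fs.subspace (chain_sp n j P m) \<and> findim (chain_sp n j P m) \<and>
    fs.dim (chain_sp n j P m) = (\<Sum>\<sigma>\<in>chains P m. fs.dim (hd \<sigma>) choose j)"
proof -
  have E: "findim (ext_pow n j (hd \<sigma>)) \<and> fs.subspace (ext_pow n j (hd \<sigma>)) \<and>
      fs.dim (ext_pow n j (hd \<sigma>)) = fs.dim (hd \<sigma>) choose j" if "\<sigma> \<in> chains P m" for \<sigma>
    using ext_pow_dim[of "hd \<sigma>" n j] sub hd_chain[OF that] by blast
  have "findim (Sp (chains P m) (\<lambda>\<sigma>. ext_pow n j (hd \<sigma>))) \<and>
     fs.dim (Sp (chains P m) (\<lambda>\<sigma>. ext_pow n j (hd \<sigma>))) = (\<Sum>\<sigma>\<in>chains P m. fs.dim (ext_pow n j (hd \<sigma>)))"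
    by (rule Sp_dim) (use finite_chains[OF fin] E in auto)
  moreover have "fs.subspace (Sp (chains P m) (\<lambda>\<sigma>. ext_pow n j (hd \<sigma>)))"
    by (rule Sp_subspace) (use E in auto)
  moreover have "(\<Sum>\<sigma>\<in>chains P m. fs.dim (ext_pow n j (hd \<sigma>))) = (\<Sum>\<sigma>\<in>chains P m. fs.dim (hd \<sigma>) choose j)"
    by (rule sum.cong) (use E in auto)
  ultimately show ?thesis unfolding chain_sp_Sp by simp
qed

lemma bdry_alt: "bdry P m f (\<tau>, S) =
   (\<Sum>\<sigma>\<in>chains P m. \<Sum>i\<le>m. (if del_nth i \<sigma> = \<tau> then (-1)^i else 0) * f (\<sigma>, S))"
  unfolding bdry_def by (auto intro!: sum.cong)

lemma bdry_linear: "Vector_Spaces.linear fscale fscale (bdry P m :: _ \<Rightarrow> _ \<Rightarrow> 'k::field)"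
proof (rule lin_fI)
  fix x y :: "(nat \<Rightarrow> 'k) set list \<times> nat set \<Rightarrow> 'k"
  show "bdry P m (x + y) = bdry P m x + bdry P m y"
  proof (rule ext)
    fix p :: "(nat \<Rightarrow> 'k) set list \<times> nat set"
    obtain \<tau> S where p: "p = (\<tau>, S)" by (cases p)
    show "bdry P m (x + y) p = (bdry P m x + bdry P m y) p"
      unfolding p plus_fun_apply bdry_alt by (simp add: distrib_left sum.distrib)
  qed
next
  fix c :: 'k and x :: "(nat \<Rightarrow> 'k) set list \<times> nat set \<Rightarrow> 'k"
  show "bdry P m (fscale c x) = fscale c (bdry P m x)"
  proof (rule ext)
    fix p :: "(nat \<Rightarrow> 'k) set list \<times> nat set"
    obtain \<tau> S where p: "p = (\<tau>, S)" by (cases p)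
    show "bdry P m (fscale c x) p = fscale c (bdry P m x) p"
      unfolding p fscale_def bdry_alt by (simp add: sum_distrib_left mult_ac)
  qed
qed

lemma telescope:
  fixes s z b :: "nat \<Rightarrow> int"
  assumes "\<And>m. s (Suc m) = z (Suc m) + b m" "s 0 = z 0"
  shows "(\<Sum>m\<le>N. (-1)^m * (z m - b m)) = (\<Sum>m\<le>N. (-1)^m * s m) - (-1)^N * b N"
proof (induction N)
  case 0
  then show ?case using assms by simp
next
  case (Suc N)
  then show ?case using assms(1)[of N] by (simp add: algebra_simps)
qed

lemma euler_chains:
  fixes P :: "(nat \<Rightarrow> 'k::field) set set"
  assumes fin: "finite P" and sub: "\<forall>x\<in>P. x \<subseteq> Vn n"
  shows "hs_euler n j P = (\<Sum>m\<le>card P. (-1)^m * int (\<Sum>\<sigma>\<in>chains P m. fs.dim (hd \<sigma>) choose j))"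
proof -
  let ?N = "card P"
  define s where "s m = int (fs.dim (chain_sp n j P m))" for m
  define z where "z m = int (fs.dim (cycles n j P m))" for m
  define b where "b m = int (fs.dim (boundaries n j P m))" for m
  have DC: "fs.subspace (chain_sp n j P m) \<and> findim (chain_sp n j P m) \<and>
    fs.dim (chain_sp n j P m) = (\<Sum>\<sigma>\<in>chains P m. fs.dim (hd \<sigma>) choose j)" for m
    by (rule dim_chain[OF fin sub])
  have s0: "s 0 = z 0" unfolding s_def z_def cycles_def by simp
  have sS: "s (Suc m) = z (Suc m) + b m" for m
  proof -
    obtain F where F: "finite F" "chain_sp n j P (Suc m) \<subseteq> fs.span F"
      using DC[of "Suc m"] unfolding findim_def by blast
    have "fs.dim (chain_sp n j P (Suc m)) =
        fs.dim {x \<in> chain_sp n j P (Suc m). bdry P (Suc m) x = 0} + fs.dim (bdry P (Suc m) ` chain_sp n j P (Suc m))"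
      by (rule rank_nullity[OF bdry_linear _ F]) (use DC in blast)
    then show ?thesis unfolding s_def z_def b_def cycles_def boundaries_def by simp
  qed
  have bN: "b ?N = 0"
  proof -
    have "chains P (Suc ?N) = {}" by (rule chains_empty[OF fin]) simp
    then have "chain_sp n j P (Suc ?N) = {0}" unfolding chain_sp_Sp Sp_def by (auto simp: fun_eq_iff)
    moreover have "bdry P (Suc ?N) 0 = 0"
      using Vector_Spaces.linear.axioms(3)[OF bdry_linear] module_hom.zero by blast
    ultimately have "boundaries n j P ?N = {0}" unfolding boundaries_def by simp
    then show ?thesis unfolding b_def using dim_zero_space by simp
  qed
  have "hs_euler n j P = (\<Sum>m\<le>?N. (-1)^m * (z m - b m))"
    unfolding hs_euler_def hs_dim_def z_def b_def fdim_eq ..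
  also have "\<dots> = (\<Sum>m\<le>?N. (-1)^m * s m)" using telescope[of s z b, OF sS s0, of ?N] bN by simp
  also have "\<dots> = (\<Sum>m\<le>card P. (-1)^m * int (\<Sum>\<sigma>\<in>chains P m. fs.dim (hd \<sigma>) choose j))"
    unfolding s_def using DC by simp
  finally show ?thesis .
qed

lemma group_chains:
  assumes fin: "finite P"
  shows "(\<Sum>\<sigma>\<in>chains P m. g (hd \<sigma>)) = (\<Sum>y\<in>P. g y * cnt P m y)"
proof -
  have "(\<Sum>\<sigma>\<in>chains P m. g (hd \<sigma>)) = (\<Sum>y\<in>P. \<Sum>\<sigma>\<in>{\<sigma>\<in>chains P m. hd \<sigma> = y}. g (hd \<sigma>))"
    by (rule sum.group[symmetric]) (use fin finite_chains[OF fin] hd_chain in auto)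
  also have "\<dots> = (\<Sum>y\<in>P. g y * cnt P m y)"
    unfolding cnt_def by (rule sum.cong[OF refl]) simp
  finally show ?thesis .
qed

lemma coeff_lin_pow: "coeff ([:1, 1:] ^ d) j = (int (d choose j))"
proof (cases "j \<le> d")
  case True
  then show ?thesis using coeff_linear_poly_power[OF True, of "1::int" 1] by simp
next
  case False
  have "degree ([:1, 1:] ^ d :: int poly) \<le> d"
    using degree_power_le[of "[:1, 1:] :: int poly" d] by simp
  then show ?thesis using False by (simp add: coeff_eq_0 binomial_eq_0)
qed

lemma pcompose_monom1: "pcompose (monom 1 d) q = q ^ d" for q :: "int poly"
proof -
  have "pcompose ([:0,1:]^d) q = q^d"
    by (induction d) (simp_all add: pcompose_mult pcompose_pCons pcompose_1)
  then show ?thesis by (simp add: monom_altdef pcompose_smult)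
qed

theorem corollary5:
  fixes n :: nat and A :: "(nat \<Rightarrow> 'k::field) set set"
  assumes "finite A"
    and "\<forall>H\<in>A. is_lin_hyperplane n H"
  shows "\<forall>j. hs_euler n j (int_lattice n A - {Vn n}) =
      coeff (- pcompose (char_poly n A) [:1, 1:] + [:1, 1:] ^ fdim (Vn n :: (nat \<Rightarrow> 'k) set)) j"
proof
  fix j
  let ?L = "int_lattice n A" and ?V = "Vn n :: (nat \<Rightarrow> 'k) set"
  let ?P = "?L - {?V}"
  have finL: "finite ?L" by (rule int_lattice_finite[OF assms(1)])
  have finP: "finite ?P" using finL by simp
  have subP: "\<forall>x\<in>?P. x \<subseteq> Vn n" using lattice_sub by blast
  have VL: "?V \<in> ?L" by (rule Vn_in_lattice)
  have mob: "mobius ?L lat_le ?V y = (if y \<in> ?L then (if y = ?V then 1 else - cc ?P y) else 0)" for y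
    by (rule mobius_eq[OF finL VL]) (use lattice_sub in blast)
  define C where "C y = int (fs.dim y choose j)" for y :: "(nat \<Rightarrow> 'k) set"
  have "hs_euler n j ?P = (\<Sum>m\<le>card ?P. (-1)^m * int (\<Sum>\<sigma>\<in>chains ?P m. fs.dim (hd \<sigma>) choose j))"
    by (rule euler_chains[OF finP subP])
  also have "\<dots> = (\<Sum>m\<le>card ?P. (-1)^m * (\<Sum>y\<in>?P. C y * int (cnt ?P m y)))"
  proof (rule sum.cong[OF refl])
    fix m
    have "int (\<Sum>\<sigma>\<in>chains ?P m. fs.dim (hd \<sigma>) choose j) = int (\<Sum>y\<in>?P. (fs.dim y choose j) * cnt ?P m y)"
      unfolding group_chains[OF finP, of "\<lambda>y. fs.dim y choose j"] ..
    also have "\<dots> = (\<Sum>y\<in>?P. C y * int (cnt ?P m y))" by (simp add: C_def)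
    finally show "(-1)^m * int (\<Sum>\<sigma>\<in>chains ?P m. fs.dim (hd \<sigma>) choose j) = (-1)^m * (\<Sum>y\<in>?P. C y * int (cnt ?P m y))"
      by simp
  qed
  also have "\<dots> = (\<Sum>y\<in>?P. C y * cc ?P y)"
    unfolding cc_def by (simp add: sum_distrib_left sum.swap[of _ "{..card ?P}"] mult_ac)
  finally have LHS: "hs_euler n j ?P = (\<Sum>y\<in>?P. C y * cc ?P y)" .
  have "coeff (pcompose (char_poly n A) [:1, 1:]) j = (\<Sum>x\<in>?L. mobius ?L lat_le ?V x * C x)"
    unfolding char_poly_def pcompose_sum coeff_sum pcompose_smult pcompose_monom1
    by (simp add: coeff_lin_pow C_def fdim_eq)
  also have "\<dots> = mobius ?L lat_le ?V ?V * C ?V + (\<Sum>x\<in>?P. mobius ?L lat_le ?V x * C x)"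
    using finL VL by (simp add: sum.remove)
  also have "\<dots> = C ?V - (\<Sum>x\<in>?P. C x * cc ?P x)"
    using mob VL by (simp add: sum_negf mult_ac)
  finally have RHS: "coeff (pcompose (char_poly n A) [:1, 1:]) j = C ?V - (\<Sum>x\<in>?P. C x * cc ?P x)" .
  have "coeff (- pcompose (char_poly n A) [:1, 1:] + [:1, 1:] ^ fdim ?V) j =
      - coeff (pcompose (char_poly n A) [:1, 1:]) j + C ?V"
    by (simp add: coeff_lin_pow C_def fdim_eq)
  then show "hs_euler n j ?P = coeff (- pcompose (char_poly n A) [:1, 1:] + [:1, 1:] ^ fdim ?V) j"
    using LHS RHS by simp
qed


end
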